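(* Consider the quickest change detection setting and the NGLR-CuSum stopping time $\widehat{\tau}(b)$ with window size $m_b$ satisfying $\liminf_{b\to\infty}m_b/b\ge\eta/I$ for a constant $\eta>1$, as defined in the context. Suppose that there are constants $0<\beta_1,C_1<\infty$, $0<\beta_2<2$, $0<C_2<\infty$ such that, when $X_1,X_2,\dots$ are i.i.d. with density $p_1$ and $n-k$ is large enough, for each $k\le i\le n$, $$\mathrm{E}_{p_1}[\mathrm{KL}(p_1\|\widehat{p}^{n,k}_{-i})]\le\frac{C_1}{(n-k)^{\beta_1}},\qquad \mathrm{E}_{p_1}\Big[\Big(\frac{1}{n-k+1}\sum_{i=k}^n\log\frac{p_1(X_i)}{\widehat{p}^{n,k}_{-i}(X_i)}\Big)^2\Big]\le\frac{C_2}{(n-k+1)^{\beta_2}}.$$ Suppose further that, with $Z_i:=\log(p_1(X_i)/p_0(X_i))$, for every $\delta\in(0,1)$, $$\sup_{t\ge\nu}\mathbb{P}_\nu\Big(\sum_{i=t}^{t+n}Z_i\le(1-\delta)nI\Big)\xrightarrow{n\to\infty}0.$$ Then $\mathrm{WADD}(\widehat{\tau}(b))\le\frac{b}{I}(1+o(1))$ as $b\to\infty$.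
   Context: Let $X_1,X_2,\dots\in\mathbb{R}^d$ be independent; for an unknown deterministic change-point $\nu\ge1$, $X_1,\dots,X_{\nu-1}$ have known density $p_0$ and $X_\nu,X_{\nu+1},\dots$ have unknown density $p_1$, both w.r.t. a dominating measure $\mu$. $\mathcal{F}_0$ is trivial and $\mathcal{F}_n=\sigma(X_1,\dots,X_n)$. $\mathbb{P}_\nu,\mathbb{E}_\nu$ denote probability/expectation with change-point $\nu$; $\mathrm{E}_{p_1}$ denotes expectation when all observations are i.i.d. with density $p_1$. $\mathrm{KL}(p\|q):=\int_{\mathrm{supp}(p)}\log(p/q)p\,d\mu$ and $I:=\mathrm{KL}(p_1\|p_0)$. For a stopping time $\tau$, $\mathrm{WADD}(\tau):=\sup_{\nu\ge1}\operatorname{ess\,sup}\mathbb{E}_\nu[(\tau-\nu+1)^+\mid\mathcal{F}_{\nu-1}]$. A fixed density estimation procedure maps a finite collection of observations to a density w.r.t. $\mu$; for $1\le k\le i\le n$, $\widehat{p}^{n,k}_{-i}$ is its output on $X_k,\dots,X_{i-1},X_{i+1},\dots,X_n$; in $\mathrm{E}_{p_1}[\mathrm{KL}(p_1\|\widehat{p})]$ the expectation is over the estimate. Let $\widehat{Z}^{n,k}_i:=\log(\widehat{p}^{n,k}_{-i}(X_i)/p_0(X_i))$ and $\widehat{\tau}(b):=\inf\{n>1:\max_{(n-m_b)^+<k\le n-1}\sum_{i=k}^n\widehat{Z}^{n,k}_i\ge b\}$. *)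

theory Defs
  imports "HOL-Probability.Probability"
begin

text \<open>Extended-real logarithm of a ratio a/b of density values, with the usual conventions
  log(a/0) = +infinity for a > 0 and log(0/b) = -infinity for b > 0
  (the case a = b = 0 is a null event in the setting below and is set to 0).\<close>
definition llr :: "real \<Rightarrow> real \<Rightarrow> ereal" where
  "llr a b = (if 0 < a \<and> 0 < b then ereal (ln (a / b))
              else if 0 < a then \<infinity> else if 0 < b then - \<infinity> else 0)"

definition KL :: "'a measure \<Rightarrow> ('a \<Rightarrow> real) \<Rightarrow> ('a \<Rightarrow> real) \<Rightarrow> ereal" where
  "KL \<mu> p q =
     enn2ereal (\<integral>\<^sup>+ x \<in> {x \<in> space \<mu>. 0 < p x}. e2ennreal (ereal (p x) * llr (p x) (q x)) \<partial>\<mu>)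
   - enn2ereal (\<integral>\<^sup>+ x \<in> {x \<in> space \<mu>. 0 < p x}. e2ennreal (- (ereal (p x) * llr (p x) (q x))) \<partial>\<mu>)"

definition is_density :: "'a measure \<Rightarrow> ('a \<Rightarrow> real) \<Rightarrow> bool" where
  "is_density \<mu> p \<longleftrightarrow> p \<in> borel_measurable \<mu> \<and> (\<forall>x\<in>space \<mu>. 0 \<le> p x)
     \<and> (\<integral>\<^sup>+ x. ennreal (p x) \<partial>\<mu>) = 1"

text \<open>Law of the whole observation sequence with change-point nu: coordinate j of the
  sample path omega is X_j (j \<ge> 1); coordinate 0 is an unused dummy.\<close>
definition law :: "'a measure \<Rightarrow> ('a \<Rightarrow> real) \<Rightarrow> ('a \<Rightarrow> real) \<Rightarrow> nat \<Rightarrow> (nat \<Rightarrow> 'a) measure" where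
  "law \<mu> p0 p1 \<nu> = (\<Pi>\<^sub>M j\<in>UNIV. if j < \<nu> then density \<mu> (\<lambda>x. ennreal (p0 x))
                                   else density \<mu> (\<lambda>x. ennreal (p1 x)))"

definition iid_law :: "'a measure \<Rightarrow> ('a \<Rightarrow> real) \<Rightarrow> (nat \<Rightarrow> 'a) measure" where
  "iid_law \<mu> p = (\<Pi>\<^sub>M j\<in>UNIV. density \<mu> (\<lambda>x. ennreal (p x)))"

definition filt :: "'a measure \<Rightarrow> (nat \<Rightarrow> 'a) measure \<Rightarrow> nat \<Rightarrow> (nat \<Rightarrow> 'a) measure" where
  "filt \<mu> M n = sigma (space M) {{\<omega> \<in> space M. \<omega> j \<in> A} | j A. j \<in> {1..n} \<and> A \<in> sets \<mu>}"

definition loo_est :: "('a list \<Rightarrow> 'a \<Rightarrow> real) \<Rightarrow> (nat \<Rightarrow> 'a) \<Rightarrow> nat \<Rightarrow> nat \<Rightarrow> nat \<Rightarrow> 'a \<Rightarrow> real" where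
  "loo_est est \<omega> n k i = est (map \<omega> ([k..<i] @ [Suc i..<Suc n]))"

definition Zhat :: "('a list \<Rightarrow> 'a \<Rightarrow> real) \<Rightarrow> ('a \<Rightarrow> real) \<Rightarrow> (nat \<Rightarrow> 'a) \<Rightarrow> nat \<Rightarrow> nat \<Rightarrow> nat \<Rightarrow> ereal" where
  "Zhat est p0 \<omega> n k i = llr (loo_est est \<omega> n k i (\<omega> i)) (p0 (\<omega> i))"

definition stops :: "('a list \<Rightarrow> 'a \<Rightarrow> real) \<Rightarrow> ('a \<Rightarrow> real) \<Rightarrow> nat \<Rightarrow> real \<Rightarrow> (nat \<Rightarrow> 'a) \<Rightarrow> nat \<Rightarrow> bool" where
  "stops est p0 m b \<omega> n \<longleftrightarrow>
     (\<exists>k. n - m < k \<and> k \<le> n - 1 \<and> ereal b \<le> (\<Sum>i=k..n. Zhat est p0 \<omega> n k i))"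

definition nglr_tau :: "('a list \<Rightarrow> 'a \<Rightarrow> real) \<Rightarrow> ('a \<Rightarrow> real) \<Rightarrow> nat \<Rightarrow> real \<Rightarrow> (nat \<Rightarrow> 'a) \<Rightarrow> enat" where
  "nglr_tau est p0 m b \<omega> =
     (if \<exists>n. 1 < n \<and> stops est p0 m b \<omega> n
      then enat (LEAST n. 1 < n \<and> stops est p0 m b \<omega> n) else \<infinity>)"

definition delay :: "enat \<Rightarrow> nat \<Rightarrow> ennreal" where
  "delay t \<nu> = (case t of enat s \<Rightarrow> ennreal (real (s + 1 - \<nu>)) | \<infinity> \<Rightarrow> \<infinity>)"

definition WADD :: "'a measure \<Rightarrow> ('a \<Rightarrow> real) \<Rightarrow> ('a \<Rightarrow> real) \<Rightarrow> ((nat \<Rightarrow> 'a) \<Rightarrow> enat) \<Rightarrow> ennreal" where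
  "WADD \<mu> p0 p1 \<tau> = (SUP \<nu>\<in>{1..}. esssup (law \<mu> p0 p1 \<nu>)
       (nn_cond_exp (law \<mu> p0 p1 \<nu>) (filt \<mu> (law \<mu> p0 p1 \<nu>) (\<nu> - 1)) (\<lambda>\<omega>. delay (\<tau> \<omega>) \<nu>)))"

end

theory Submission
  imports Defs
begin

lemma PiM_coord_indep:
  assumes M: "\<And>i. prob_space (M i)"
  shows "prob_space.indep_vars (PiM UNIV M) M (\<lambda>i \<omega>. \<omega> i) UNIV"
proof -
  interpret Q: prob_space "PiM UNIV M" by (intro prob_space_PiM M)
  have rv: "\<And>i. Q.random_variable (M i) (\<lambda>\<omega>. \<omega> i)" by simp
  have "distr (PiM UNIV M) (PiM UNIV M) (\<lambda>x. \<lambda>i\<in>UNIV. x i) = PiM UNIV M"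
  proof -
    have e: "(\<lambda>x. \<lambda>i\<in>UNIV. x i) = (\<lambda>x. x)" by (auto simp: restrict_def)
    show ?thesis by (subst e) (rule distr_id)
  qed
  moreover have "(\<Pi>\<^sub>M i\<in>UNIV. distr (PiM UNIV M) (M i) (\<lambda>\<omega>. \<omega> i)) = PiM UNIV M"
    by (intro PiM_cong refl distr_PiM_component M) auto
  ultimately show ?thesis
    by (subst Q.indep_vars_iff_distr_eq_PiM[OF _ rv]) auto
qed

lemma PiM_indep_nn:
  fixes f g :: "_ \<Rightarrow> ennreal"
  assumes M: "\<And>i. prob_space (M i)" and AB: "A \<inter> B = {}"
  and f[measurable]: "f \<in> borel_measurable (PiM A M)" and g[measurable]: "g \<in> borel_measurable (PiM B M)"
  shows "(\<integral>\<^sup>+\<omega>. f (restrict \<omega> A) * g (restrict \<omega> B) \<partial>PiM UNIV M)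
     = (\<integral>\<^sup>+\<omega>. f (restrict \<omega> A) \<partial>PiM UNIV M) * (\<integral>\<^sup>+\<omega>. g (restrict \<omega> B) \<partial>PiM UNIV M)"
proof -
  interpret Q: prob_space "PiM UNIV M" by (intro prob_space_PiM M)
  have "Q.indep_var (PiM A M) (\<lambda>\<omega>. restrict (\<lambda>i. \<omega> i) A) (PiM B M) (\<lambda>\<omega>. restrict (\<lambda>i. \<omega> i) B)"
    by (rule Q.indep_var_restrict[OF PiM_coord_indep[OF M] AB]) auto
  then have "Q.indep_var borel (f \<circ> (\<lambda>\<omega>. restrict \<omega> A)) borel (g \<circ> (\<lambda>\<omega>. restrict \<omega> B))"
    by (intro Q.indep_var_compose[OF _ f g]) simp
  then have ind: "Q.indep_vars (\<lambda>_. borel) (case_bool (f \<circ> (\<lambda>\<omega>. restrict \<omega> A)) (g \<circ> (\<lambda>\<omega>. restrict \<omega> B))) UNIV"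
  proof -
    have e: "(case_bool borel borel :: bool \<Rightarrow> ennreal measure) = (\<lambda>_. borel)" by (auto simp: fun_eq_iff split: bool.split)
    show ?thesis using \<open>Q.indep_var borel _ borel _\<close> unfolding Q.indep_var_def e .
  qed
  have "(\<integral>\<^sup>+\<omega>. (\<Prod>i\<in>UNIV. case_bool (f \<circ> (\<lambda>\<omega>. restrict \<omega> A)) (g \<circ> (\<lambda>\<omega>. restrict \<omega> B)) i \<omega>) \<partial>PiM UNIV M)
     = (\<Prod>i\<in>UNIV. \<integral>\<^sup>+\<omega>. case_bool (f \<circ> (\<lambda>\<omega>. restrict \<omega> A)) (g \<circ> (\<lambda>\<omega>. restrict \<omega> B)) i \<omega> \<partial>PiM UNIV M)"
    by (rule Q.indep_vars_nn_integral[OF _ ind]) auto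
  then show ?thesis by (simp add: UNIV_bool mult.commute o_def)
qed

lemma meas_sets_cong: "f \<in> measurable M N \<Longrightarrow> sets N = sets N' \<Longrightarrow> f \<in> measurable M N'"
  using measurable_cong_sets[of M M N N'] by simp

lemma llr_meas[measurable]:
  assumes [measurable]: "f \<in> borel_measurable M" "g \<in> borel_measurable M"
  shows "(\<lambda>x. llr (f x) (g x)) \<in> borel_measurable M"
  unfolding llr_def by measurable

lemma loo_meas:
  assumes est_meas: "\<And>L. (\<lambda>(f, x). est (map f [0..<L]) x) \<in> borel_measurable ((\<Pi>\<^sub>M j\<in>{0..<L}. \<mu>) \<Otimes>\<^sub>M \<mu>)"
    and setsM: "\<And>j. j \<in> K \<Longrightarrow> sets (M j) = sets \<mu>"
    and K: "{k..n} \<subseteq> K" and i: "i \<in> {k..n}"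
  shows "(\<lambda>x. loo_est est x n k i (x i)) \<in> borel_measurable (PiM K M)"
proof -
  define lst where "lst = [k..<i] @ [Suc i..<Suc n]"
  define len where "len = length lst"
  have lstK: "\<And>j. j < len \<Longrightarrow> lst ! j \<in> K"
  proof -
    fix j assume "j < len"
    then have "lst ! j \<in> set lst" unfolding len_def by simp
    then show "lst ! j \<in> K" using K i unfolding lst_def by auto
  qed
  have comp: "\<And>j. j \<in> K \<Longrightarrow> (\<lambda>x. x j) \<in> measurable (PiM K M) \<mu>"
    using setsM by (intro meas_sets_cong[OF measurable_component_singleton]) auto
  have m1: "(\<lambda>x. (restrict (\<lambda>j. x (lst!j)) {0..<len}, x i)) \<in> measurable (PiM K M) ((PiM {0..<len} (\<lambda>_. \<mu>)) \<Otimes>\<^sub>M \<mu>)"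
    using i K by (intro measurable_Pair measurable_restrict comp lstK) auto
  have eq: "\<And>x. loo_est est x n k i (x i) = (\<lambda>(f, x). est (map f [0..<len]) x) (restrict (\<lambda>j. x (lst!j)) {0..<len}, x i)"
  proof -
    fix x :: "nat \<Rightarrow> 'a"
    have "map (restrict (\<lambda>j. x (lst!j)) {0..<len}) [0..<len] = map (\<lambda>j. x (lst!j)) [0..<len]"
      by (auto simp: restrict_def)
    also have "\<dots> = map x (map ((!) lst) [0..<length lst])" unfolding len_def by simp
    also have "\<dots> = map x lst" by (simp only: map_nth)
    finally show "loo_est est x n k i (x i) = (\<lambda>(f, x). est (map f [0..<len]) x) (restrict (\<lambda>j. x (lst!j)) {0..<len}, x i)"
      by (simp add: loo_est_def lst_def)
  qed
  show ?thesis unfolding eq by (rule measurable_compose[OF m1 est_meas])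
qed

lemma Zhat_meas:
  assumes est_meas: "\<And>L. (\<lambda>(f, x). est (map f [0..<L]) x) \<in> borel_measurable ((\<Pi>\<^sub>M j\<in>{0..<L}. \<mu>) \<Otimes>\<^sub>M \<mu>)"
    and setsM: "\<And>j. j \<in> K \<Longrightarrow> sets (M j) = sets \<mu>"
    and p0: "p0 \<in> borel_measurable \<mu>"
    and K: "{k..n} \<subseteq> K" and i: "i \<in> {k..n}"
  shows "(\<lambda>x. Zhat est p0 x n k i) \<in> borel_measurable (PiM K M)"
proof -
  have comp: "(\<lambda>x. x i) \<in> measurable (PiM K M) \<mu>"
    using setsM i K by (intro meas_sets_cong[OF measurable_component_singleton]) auto
  have [measurable]: "(\<lambda>x. p0 (x i)) \<in> borel_measurable (PiM K M)"
    by (rule measurable_compose[OF comp p0])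
  have [measurable]: "(\<lambda>x. loo_est est x n k i (x i)) \<in> borel_measurable (PiM K M)"
    by (rule loo_meas[OF est_meas setsM K i])
  show ?thesis unfolding Zhat_def by measurable
qed

lemma loo_shift: "loo_est est (\<lambda>t. \<omega> (t + s)) n k i = loo_est est \<omega> (n + s) (k + s) (i + s)"
proof -
  have u: "\<And>a c. map (\<lambda>t. \<omega> (t + s)) [a..<c] = map \<omega> [a + s..<c + s]"
  proof -
    fix a c
    have "map (\<lambda>t. \<omega> (t + s)) [a..<c] = map \<omega> (map (\<lambda>t. t + s) [a..<c])" by simp
    also have "map (\<lambda>t. t + s) [a..<c] = [a + s..<c + s]"
      by (induct c) auto
    finally show "map (\<lambda>t. \<omega> (t + s)) [a..<c] = map \<omega> [a + s..<c + s]" .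
  qed
  show ?thesis unfolding loo_est_def by (simp add: u)
qed

lemma Zhat_shift: "Zhat est p0 (\<lambda>t. \<omega> (t + s)) n k i = Zhat est p0 \<omega> (n + s) (k + s) (i + s)"
  unfolding Zhat_def loo_shift by simp

lemma loo_cong:
  assumes "\<And>t. t \<in> {k..n} \<Longrightarrow> x t = y t" "i \<in> {k..n}"
  shows "loo_est est x n k i = loo_est est y n k i"
proof -
  have "map x ([k..<i] @ [Suc i..<Suc n]) = map y ([k..<i] @ [Suc i..<Suc n])"
    using assms by (intro map_cong refl) auto
  then show ?thesis unfolding loo_est_def by metis
qed

lemma Zhat_cong:
  assumes "\<And>t. t \<in> {k..n} \<Longrightarrow> x t = y t" "i \<in> {k..n}"
  shows "Zhat est p0 x n k i = Zhat est p0 y n k i"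
  unfolding Zhat_def using loo_cong[OF assms] assms by simp

lemma prob_space_dens:
  assumes "is_density \<mu> p" shows "prob_space (density \<mu> (\<lambda>x. ennreal (p x)))"
proof (rule prob_spaceI)
  have m: "p \<in> borel_measurable \<mu>" using assms by (simp add: is_density_def)
  show "emeasure (density \<mu> (\<lambda>x. ennreal (p x))) (space (density \<mu> (\<lambda>x. ennreal (p x)))) = 1"
    using assms m by (simp add: emeasure_density is_density_def)
qed

lemma iid_law_eq: "iid_law \<mu> p1 = law \<mu> p0 p1 0"
  unfolding iid_law_def law_def by simp

lemma law_shift:
  assumes d0: "is_density \<mu> p0" and d1: "is_density \<mu> p1" and s: "\<nu> \<le> s"
  shows "distr (law \<mu> p0 p1 \<nu>) (iid_law \<mu> p1) (\<lambda>\<omega> n. \<omega> (n + s)) = iid_law \<mu> p1"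
proof -
  define N where "N = (\<lambda>j. if j < \<nu> then density \<mu> (\<lambda>x. ennreal (p0 x)) else density \<mu> (\<lambda>x. ennreal (p1 x)))"
  have P: "\<And>j. prob_space (N j)" unfolding N_def using prob_space_dens[OF d0] prob_space_dens[OF d1] by auto
  have F1: "distr (PiM UNIV N) (\<Pi>\<^sub>M i\<in>UNIV. N (i + s)) (\<lambda>\<omega>. \<lambda>n\<in>UNIV. \<omega> (n + s)) = (\<Pi>\<^sub>M i\<in>UNIV. N (i + s))"
    by (rule distr_PiM_reindex[OF P]) (auto simp: inj_on_def)
  have F2: "(\<Pi>\<^sub>M i\<in>UNIV. N (i + s)) = iid_law \<mu> p1"
    unfolding iid_law_def N_def using s by (intro PiM_cong) auto
  have e: "(\<lambda>\<omega>. \<lambda>n\<in>UNIV. \<omega> (n + s)) = (\<lambda>\<omega> n. \<omega> (n + s))" by (auto simp: restrict_def)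
  have F3: "law \<mu> p0 p1 \<nu> = PiM UNIV N" unfolding law_def N_def by simp
  show ?thesis using F1 unfolding F2 e F3 .
qed

lemma shift_meas:
  assumes d0: "is_density \<mu> p0" and d1: "is_density \<mu> p1" and s: "\<nu> \<le> s"
  shows "(\<lambda>\<omega> n. \<omega> (n + s)) \<in> measurable (law \<mu> p0 p1 \<nu>) (iid_law \<mu> p1)"
proof -
  have "(\<lambda>\<omega>. \<lambda>n\<in>UNIV. \<omega> (n + s)) \<in> measurable (law \<mu> p0 p1 \<nu>) (iid_law \<mu> p1)"
    unfolding law_def iid_law_def
    apply (intro measurable_restrict)
    apply (rule meas_sets_cong[OF measurable_component_singleton])
    apply auto
    done
  moreover have e: "(\<lambda>\<omega>. \<lambda>n\<in>UNIV. \<omega> (n + s)) = (\<lambda>\<omega> n. \<omega> (n + s))" by (auto simp: restrict_def)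
  ultimately show ?thesis by (simp add: restrict_def)
qed

lemma law_shift_nn:
  assumes d0: "is_density \<mu> p0" and d1: "is_density \<mu> p1" and s: "\<nu> \<le> s"
    and h: "h \<in> borel_measurable (iid_law \<mu> p1)"
  shows "(\<integral>\<^sup>+\<omega>. h (\<lambda>n. \<omega> (n + s)) \<partial>law \<mu> p0 p1 \<nu>) = (\<integral>\<^sup>+y. h y \<partial>iid_law \<mu> p1)"
proof -
  have "(\<integral>\<^sup>+y. h y \<partial>iid_law \<mu> p1) = (\<integral>\<^sup>+y. h y \<partial>distr (law \<mu> p0 p1 \<nu>) (iid_law \<mu> p1) (\<lambda>\<omega> n. \<omega> (n + s)))"
    using law_shift[OF d0 d1 s] by simp
  also have "\<dots> = (\<integral>\<^sup>+\<omega>. h (\<lambda>n. \<omega> (n + s)) \<partial>law \<mu> p0 p1 \<nu>)"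
    by (rule nn_integral_distr[OF shift_meas[OF d0 d1 s]]) (use h in simp)
  finally show ?thesis by simp
qed

lemma law_shift_emeasure:
  assumes d0: "is_density \<mu> p0" and d1: "is_density \<mu> p1" and s: "\<nu> \<le> s"
    and E: "E \<in> sets (iid_law \<mu> p1)"
  shows "emeasure (law \<mu> p0 p1 \<nu>) {\<omega> \<in> space (law \<mu> p0 p1 \<nu>). (\<lambda>n. \<omega> (n + s)) \<in> E} = emeasure (iid_law \<mu> p1) E"
proof -
  have "emeasure (iid_law \<mu> p1) E = emeasure (distr (law \<mu> p0 p1 \<nu>) (iid_law \<mu> p1) (\<lambda>\<omega> n. \<omega> (n + s))) E"
    using law_shift[OF d0 d1 s] by simp
  also have "\<dots> = emeasure (law \<mu> p0 p1 \<nu>) ((\<lambda>\<omega> n. \<omega> (n + s)) -` E \<inter> space (law \<mu> p0 p1 \<nu>))"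
    by (rule emeasure_distr[OF shift_meas[OF d0 d1 s] E])
  also have "(\<lambda>\<omega> n. \<omega> (n + s)) -` E \<inter> space (law \<mu> p0 p1 \<nu>) = {\<omega> \<in> space (law \<mu> p0 p1 \<nu>). (\<lambda>n. \<omega> (n + s)) \<in> E}"
    by auto
  finally show ?thesis by simp
qed

definition blk :: "('a list \<Rightarrow> 'a \<Rightarrow> real) \<Rightarrow> ('a \<Rightarrow> real) \<Rightarrow> nat \<Rightarrow> (nat \<Rightarrow> 'a) \<Rightarrow> nat \<Rightarrow> ereal" where
  "blk est p0 L y j = (\<Sum>i=j*L..j*L+L-1. Zhat est p0 y (j*L+L-1) (j*L) i)"

definition failb :: "('a list \<Rightarrow> 'a \<Rightarrow> real) \<Rightarrow> ('a \<Rightarrow> real) \<Rightarrow> nat \<Rightarrow> real \<Rightarrow> (nat \<Rightarrow> 'a) \<Rightarrow> nat \<Rightarrow> bool" where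
  "failb est p0 L b y j \<longleftrightarrow> blk est p0 L y j < ereal b"

definition Gf :: "('a list \<Rightarrow> 'a \<Rightarrow> real) \<Rightarrow> ('a \<Rightarrow> real) \<Rightarrow> nat \<Rightarrow> real \<Rightarrow> (nat \<Rightarrow> 'a) \<Rightarrow> ennreal" where
  "Gf est p0 L b y = (\<Sum>j. if (\<forall>i<j. failb est p0 L b y i) then 1 else 0)"

lemma Gf_lower:
  assumes "\<forall>i<j. failb est p0 L b y i"
  shows "of_nat (Suc j) \<le> Gf est p0 L b y"
proof -
  have "of_nat (Suc j) = (\<Sum>t<Suc j. (if (\<forall>i<t. failb est p0 L b y i) then 1 else 0 :: ennreal))"
    using assms by simp
  also have "\<dots> \<le> Gf est p0 L b y" unfolding Gf_def
    by (rule sum_le_suminf) (auto intro: summableI)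
  finally show ?thesis .
qed

lemma Gf_top:
  assumes "\<forall>i. failb est p0 L b y i"
  shows "Gf est p0 L b y = top"
proof (rule ccontr)
  assume "Gf est p0 L b y \<noteq> top"
  then obtain n where "Gf est p0 L b y < of_nat n" using ennreal_Ex_less_of_nat top.not_eq_extremum by blast
  moreover have "of_nat (Suc n) \<le> Gf est p0 L b y" using assms by (intro Gf_lower) auto
  ultimately show False
    by (meson leD less_le_trans of_nat_le_iff order.strict_trans1 lessI less_imp_le)
qed

lemma tau_bound:
  assumes L2: "2 \<le> L" and Lm: "L \<le> m" and nu: "1 \<le> \<nu>"
  shows "delay (nglr_tau est p0 m b \<omega>) \<nu> \<le> of_nat L * Gf est p0 L b (\<lambda>n. \<omega> (n + \<nu>))"
proof (cases "\<forall>i. failb est p0 L b (\<lambda>n. \<omega> (n + \<nu>)) i")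
  case True
  then show ?thesis using Gf_top[OF True] L2 by (simp add: ennreal_mult_top)
next
  case False
  define y where "y = (\<lambda>n. \<omega> (n + \<nu>))"
  define j where "j = (LEAST j. \<not> failb est p0 L b y j)"
  have nj: "\<not> failb est p0 L b y j" unfolding j_def using False y_def by (metis (mono_tags) LeastI)
  have bef: "\<forall>i<j. failb est p0 L b y i" unfolding j_def using not_less_Least by blast
  define n where "n = j*L + L - 1 + \<nu>"
  define k where "k = j*L + \<nu>"
  have "(\<Sum>i=k..n. Zhat est p0 \<omega> n k i) = (\<Sum>i=j*L..j*L+L-1. Zhat est p0 \<omega> n k (i + \<nu>))"
    using sum.shift_bounds_cl_nat_ivl[of "\<lambda>i. Zhat est p0 \<omega> n k i" "j*L" \<nu> "j*L+L-1"]
    by (simp add: n_def k_def)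
  also have "\<dots> = blk est p0 L y j"
    unfolding blk_def y_def Zhat_shift n_def k_def by simp
  finally have sumeq: "(\<Sum>i=k..n. Zhat est p0 \<omega> n k i) = blk est p0 L y j" .
  have st: "stops est p0 m b \<omega> n"
    unfolding stops_def
  proof (intro exI conjI)
    show "n - m < k" using Lm L2 nu unfolding n_def k_def by arith
    show "k \<le> n - 1" using L2 unfolding n_def k_def by simp
    show "ereal b \<le> (\<Sum>i=k..n. Zhat est p0 \<omega> n k i)" using nj sumeq unfolding failb_def by simp
  qed
  have n1: "1 < n" using L2 nu unfolding n_def by simp
  have tau: "nglr_tau est p0 m b \<omega> = enat (LEAST n. 1 < n \<and> stops est p0 m b \<omega> n)"
    unfolding nglr_tau_def using st n1 by auto
  have le: "(LEAST n. 1 < n \<and> stops est p0 m b \<omega> n) \<le> n" using st n1 by (intro Least_le) auto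
  have "delay (nglr_tau est p0 m b \<omega>) \<nu> \<le> ennreal (real (n + 1 - \<nu>))"
    unfolding tau delay_def using le by (simp add: ennreal_le_iff)
  also have "\<dots> = of_nat L * of_nat (Suc j)"
  proof -
    have "n + 1 - \<nu> = L * Suc j" using L2 unfolding n_def by (simp add: algebra_simps)
    then have "ennreal (real (n + 1 - \<nu>)) = of_nat (L * Suc j)" by (simp add: ennreal_of_nat_eq_real_of_nat)
    then show ?thesis by (simp only: of_nat_mult)
  qed
  also have "\<dots> \<le> of_nat L * Gf est p0 L b y"
    by (intro mult_left_mono Gf_lower bef) auto
  finally show ?thesis unfolding y_def .
qed

lemma blk_meas:
  assumes est_meas: "\<And>L. (\<lambda>(f, x). est (map f [0..<L]) x) \<in> borel_measurable ((\<Pi>\<^sub>M j\<in>{0..<L}. \<mu>) \<Otimes>\<^sub>M \<mu>)"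
    and setsM: "\<And>j. j \<in> K \<Longrightarrow> sets (M j) = sets \<mu>"
    and p0: "p0 \<in> borel_measurable \<mu>"
    and K: "{j*L..j*L+L-1} \<subseteq> K"
  shows "(\<lambda>y. blk est p0 L y j) \<in> borel_measurable (PiM K M)"
  unfolding blk_def
  by (rule borel_measurable_ereal_sum, rule Zhat_meas[OF est_meas setsM p0 K]) auto

lemma failb_meas:
  assumes est_meas: "\<And>L. (\<lambda>(f, x). est (map f [0..<L]) x) \<in> borel_measurable ((\<Pi>\<^sub>M j\<in>{0..<L}. \<mu>) \<Otimes>\<^sub>M \<mu>)"
    and setsM: "\<And>j. j \<in> K \<Longrightarrow> sets (M j) = sets \<mu>"
    and p0: "p0 \<in> borel_measurable \<mu>"
    and K: "{j*L..j*L+L-1} \<subseteq> K"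
  shows "Measurable.pred (PiM K M) (\<lambda>y. failb est p0 L b y j)"
proof -
  have [measurable]: "(\<lambda>y. blk est p0 L y j) \<in> borel_measurable (PiM K M)"
    by (rule blk_meas[OF est_meas setsM p0 K])
  show ?thesis unfolding failb_def by measurable
qed

lemma Gf_meas:
  assumes est_meas: "\<And>L. (\<lambda>(f, x). est (map f [0..<L]) x) \<in> borel_measurable ((\<Pi>\<^sub>M j\<in>{0..<L}. \<mu>) \<Otimes>\<^sub>M \<mu>)"
    and setsM: "\<And>j. sets (M j) = sets \<mu>"
    and p0: "p0 \<in> borel_measurable \<mu>"
  shows "Gf est p0 L b \<in> borel_measurable (PiM UNIV M)"
proof -
  have [measurable]: "\<And>j. Measurable.pred (PiM UNIV M) (\<lambda>y. failb est p0 L b y j)"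
    by (rule failb_meas[OF est_meas setsM p0]) auto
  have "(\<lambda>y. Gf est p0 L b y) \<in> borel_measurable (PiM UNIV M)"
    unfolding Gf_def by measurable
  then show ?thesis by simp
qed

lemma filt_sub:
  assumes sets_mu: "sets \<mu> = sets borel"
  shows "sets (filt \<mu> (law \<mu> p0 p1 \<nu>) (\<nu> - 1)) \<subseteq> {(\<lambda>\<omega>. restrict \<omega> {..<\<nu>}) -` A \<inter> space (law \<mu> p0 p1 \<nu>) | A. A \<in> sets (PiM {..<\<nu>} (\<lambda>j. if j < \<nu> then density \<mu> (\<lambda>x. ennreal (p0 x)) else density \<mu> (\<lambda>x. ennreal (p1 x))))}"
    and "space (filt \<mu> (law \<mu> p0 p1 \<nu>) (\<nu> - 1)) = space (law \<mu> p0 p1 \<nu>)"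
    and "sets (filt \<mu> (law \<mu> p0 p1 \<nu>) (\<nu> - 1)) \<subseteq> sets (law \<mu> p0 p1 \<nu>)"
proof -
  define N where "N = (\<lambda>j. if j < \<nu> then density \<mu> (\<lambda>x. ennreal (p0 x)) else density \<mu> (\<lambda>x. ennreal (p1 x)))"
  define M where "M = law \<mu> p0 p1 \<nu>"
  have MN: "M = PiM UNIV N" unfolding M_def law_def N_def by simp
  define G where "G = {{\<omega> \<in> space M. \<omega> j \<in> A} | j A. j \<in> {1..\<nu> - 1} \<and> A \<in> sets \<mu>}"
  have G: "G \<subseteq> Pow (space M)" unfolding G_def by auto
  have F: "filt \<mu> M (\<nu> - 1) = sigma (space M) G" unfolding filt_def G_def by simp
  have sF: "sets (filt \<mu> M (\<nu> - 1)) = sigma_sets (space M) G" unfolding F using G by simp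
  show "space (filt \<mu> (law \<mu> p0 p1 \<nu>) (\<nu> - 1)) = space (law \<mu> p0 p1 \<nu>)"
    unfolding M_def[symmetric] F using G by simp
  have sN: "\<And>j. sets (N j) = sets \<mu>" unfolding N_def by simp
  define V where "V = vimage_algebra (space M) (\<lambda>\<omega>. restrict \<omega> {..<\<nu>}) (PiM {..<\<nu>} N)"
  have rmeas: "(\<lambda>\<omega>. restrict \<omega> {..<\<nu>}) \<in> space M \<rightarrow> space (PiM {..<\<nu>} N)"
    unfolding MN by (auto simp: space_PiM split: if_splits)
  have sV: "sets V = {(\<lambda>\<omega>. restrict \<omega> {..<\<nu>}) -` A \<inter> space M | A. A \<in> sets (PiM {..<\<nu>} N)}"
    unfolding V_def by (rule sets_vimage_algebra2[OF rmeas])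
  have GV: "G \<subseteq> sets V"
  proof
    fix X assume "X \<in> G"
    then obtain j A where X: "X = {\<omega> \<in> space M. \<omega> j \<in> A}" and j: "j \<in> {1..\<nu> - 1}" and A: "A \<in> sets \<mu>"
      unfolding G_def by auto
    have "{x \<in> space (PiM {..<\<nu>} N). x j \<in> A} \<in> sets (PiM {..<\<nu>} N)"
      using j A sN by (intro sets_Collect_single) auto
    moreover have "X = (\<lambda>\<omega>. restrict \<omega> {..<\<nu>}) -` {x \<in> space (PiM {..<\<nu>} N). x j \<in> A} \<inter> space M"
      using j rmeas unfolding X by auto
    ultimately show "X \<in> sets V" unfolding sV by blast
  qed
  have "sigma_sets (space M) G \<subseteq> sets V"
    using sets.sigma_sets_subset[OF GV] unfolding V_def by simp
  then show "sets (filt \<mu> (law \<mu> p0 p1 \<nu>) (\<nu> - 1)) \<subseteq> {(\<lambda>\<omega>. restrict \<omega> {..<\<nu>}) -` A \<inter> space (law \<mu> p0 p1 \<nu>) | A. A \<in> sets (PiM {..<\<nu>} (\<lambda>j. if j < \<nu> then density \<mu> (\<lambda>x. ennreal (p0 x)) else density \<mu> (\<lambda>x. ennreal (p1 x))))}"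
    using sF sV unfolding M_def N_def by simp
  have GM: "G \<subseteq> sets M"
  proof
    fix X assume "X \<in> G"
    then obtain j A where X: "X = {\<omega> \<in> space M. \<omega> j \<in> A}" and A: "A \<in> sets \<mu>"
      unfolding G_def by auto
    show "X \<in> sets M" unfolding X MN using A sN by (intro sets_Collect_single) auto
  qed
  show "sets (filt \<mu> (law \<mu> p0 p1 \<nu>) (\<nu> - 1)) \<subseteq> sets (law \<mu> p0 p1 \<nu>)"
    using sF sets.sigma_sets_subset[OF GM] unfolding M_def by simp
qed

lemma esssup_bound:
  assumes sets_mu: "sets \<mu> = sets borel"
    and d0: "is_density \<mu> p0" and d1: "is_density \<mu> p1"
    and est_meas: "\<And>L. (\<lambda>(f, x). est (map f [0..<L]) x) \<in> borel_measurable ((\<Pi>\<^sub>M j\<in>{0..<L}. \<mu>) \<Otimes>\<^sub>M \<mu>)"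
    and L2: "2 \<le> L" and Lm: "L \<le> m" and nu: "1 \<le> \<nu>"
  shows "esssup (law \<mu> p0 p1 \<nu>) (nn_cond_exp (law \<mu> p0 p1 \<nu>) (filt \<mu> (law \<mu> p0 p1 \<nu>) (\<nu> - 1))
            (\<lambda>\<omega>. delay (nglr_tau est p0 m b \<omega>) \<nu>))
         \<le> of_nat L * (\<integral>\<^sup>+ y. Gf est p0 L b y \<partial>iid_law \<mu> p1)"
proof -
  define N where "N = (\<lambda>j. if j < \<nu> then density \<mu> (\<lambda>x. ennreal (p0 x)) else density \<mu> (\<lambda>x. ennreal (p1 x)))"
  define M where "M = law \<mu> p0 p1 \<nu>"
  define F where "F = filt \<mu> M (\<nu> - 1)"
  have MN: "M = PiM UNIV N" unfolding M_def law_def N_def by simp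
  have PN: "\<And>j. prob_space (N j)" unfolding N_def using prob_space_dens[OF d0] prob_space_dens[OF d1] by auto
  have sN: "\<And>j. sets (N j) = sets \<mu>" unfolding N_def by simp
  interpret prob_space M unfolding MN by (intro prob_space_PiM PN)
  have sub: "subalgebra M F" unfolding subalgebra_def F_def M_def
    using filt_sub[OF sets_mu, of p0 p1 \<nu>] by simp
  have "finite_measure_subalgebra M F"
    by (simp add: finite_measure_subalgebra_def finite_measure_subalgebra_axioms_def sub finite_measure_axioms)
  then interpret S: sigma_finite_subalgebra M F by (rule finite_measure_subalgebra_is_sigma_finite)
  have p0m: "p0 \<in> borel_measurable \<mu>" using d0 by (simp add: is_density_def)
  have Gm: "Gf est p0 L b \<in> borel_measurable (iid_law \<mu> p1)"
    unfolding iid_law_def by (rule Gf_meas[OF est_meas _ p0m]) simp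
  have Gm'[measurable]: "(\<lambda>\<omega>. Gf est p0 L b (\<lambda>n. \<omega> (n + \<nu>))) \<in> borel_measurable M"
    unfolding M_def by (rule measurable_compose[OF shift_meas[OF d0 d1 order_refl] Gm])
  define f0 where "f0 \<omega> = of_nat L * Gf est p0 L b (\<lambda>n. \<omega> (n + \<nu>))" for \<omega>
  have f0m[measurable]: "f0 \<in> borel_measurable M" unfolding f0_def by measurable
  define c0 where "c0 = of_nat L * (\<integral>\<^sup>+ y. Gf est p0 L b y \<partial>iid_law \<mu> p1)"
  have c0: "(\<integral>\<^sup>+ x. f0 x \<partial>M) = c0"
  proof -
    have "(\<integral>\<^sup>+ x. f0 x \<partial>M) = of_nat L * (\<integral>\<^sup>+x. Gf est p0 L b (\<lambda>n. x (n + \<nu>)) \<partial>M)"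
      unfolding f0_def by (rule nn_integral_cmult[OF Gm'])
    also have "(\<integral>\<^sup>+x. Gf est p0 L b (\<lambda>n. x (n + \<nu>)) \<partial>M) = (\<integral>\<^sup>+ y. Gf est p0 L b y \<partial>iid_law \<mu> p1)"
      unfolding M_def by (rule law_shift_nn[OF d0 d1 order_refl Gm])
    finally show ?thesis unfolding c0_def .
  qed
  have key: "(\<integral>\<^sup>+x\<in>A. f0 x \<partial>M) = (\<integral>\<^sup>+x\<in>A. c0 \<partial>M)" if AF: "A \<in> sets F" for A
  proof -
    obtain A' where A': "A' \<in> sets (PiM {..<\<nu>} N)" and Aeq: "A = (\<lambda>\<omega>. restrict \<omega> {..<\<nu>}) -` A' \<inter> space M"
      using filt_sub(1)[OF sets_mu, of p0 p1 \<nu>] AF unfolding F_def M_def N_def by blast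
    have AM: "A \<in> sets M" using AF sub by (auto simp: subalgebra_def)
    define g' where "g' z = of_nat L * Gf est p0 L b (\<lambda>n. z (n + \<nu>))" for z :: "nat \<Rightarrow> 'a"
    have sh: "(\<lambda>z. \<lambda>n\<in>UNIV. z (n + \<nu>)) \<in> measurable (PiM {\<nu>..} N) (iid_law \<mu> p1)"
      unfolding iid_law_def
      apply (intro measurable_restrict)
      apply (rule meas_sets_cong[OF measurable_component_singleton])
      apply (auto simp: sN)
      done
    have e: "(\<lambda>z. \<lambda>n\<in>UNIV. z (n + \<nu>)) = (\<lambda>z n. z (n + \<nu>))" by (auto simp: restrict_def)
    have sh': "(\<lambda>z n. z (n + \<nu>)) \<in> measurable (PiM {\<nu>..} N) (iid_law \<mu> p1)"
      using sh unfolding e .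
    have g'm: "g' \<in> borel_measurable (PiM {\<nu>..} N)"
    proof -
      have [measurable]: "(\<lambda>z. Gf est p0 L b (\<lambda>n. z (n + \<nu>))) \<in> borel_measurable (PiM {\<nu>..} N)"
        by (rule measurable_compose[OF sh' Gm])
      show ?thesis unfolding g'_def by measurable
    qed
    have "(\<integral>\<^sup>+x\<in>A. f0 x \<partial>M) = (\<integral>\<^sup>+x. indicator A' (restrict x {..<\<nu>}) * g' (restrict x {\<nu>..}) \<partial>M)"
      by (rule nn_integral_cong) (auto simp: Aeq f0_def g'_def indicator_def)
    also have "\<dots> = (\<integral>\<^sup>+x. indicator A' (restrict x {..<\<nu>}) \<partial>M) * (\<integral>\<^sup>+x. g' (restrict x {\<nu>..}) \<partial>M)"
      unfolding MN by (rule PiM_indep_nn[OF PN]) (auto simp: g'm intro: borel_measurable_indicator[OF A'])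
    also have "(\<integral>\<^sup>+x. indicator A' (restrict x {..<\<nu>}) \<partial>M) = (\<integral>\<^sup>+x. indicator A x \<partial>M)"
      by (rule nn_integral_cong) (auto simp: Aeq indicator_def)
    also have "\<dots> = emeasure M A" using AM by simp
    also have "(\<integral>\<^sup>+x. g' (restrict x {\<nu>..}) \<partial>M) = (\<integral>\<^sup>+x. f0 x \<partial>M)"
      by (rule nn_integral_cong) (auto simp: f0_def g'_def)
    also have "\<dots> = c0" by (rule c0)
    also have "emeasure M A * c0 = (\<integral>\<^sup>+x\<in>A. c0 \<partial>M)"
      using nn_integral_cmult_indicator[OF AM, of c0] by (simp add: mult.commute)
    finally show ?thesis .
  qed
  have ae0: "AE x in M. c0 = nn_cond_exp M F f0 x"
    by (rule S.nn_cond_exp_charact[OF key f0m]) simp_all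
  have ae1: "AE x in M. nn_cond_exp M F (\<lambda>\<omega>. delay (nglr_tau est p0 m b \<omega>) \<nu>) x \<le> c0"
  proof (cases "(\<lambda>\<omega>. delay (nglr_tau est p0 m b \<omega>) \<nu>) \<in> borel_measurable M")
    case True
    have "AE x in M. nn_cond_exp M F (\<lambda>\<omega>. delay (nglr_tau est p0 m b \<omega>) \<nu>) x \<le> nn_cond_exp M F f0 x"
      by (rule S.nn_cond_exp_mono[OF _ True f0m]) (auto simp: f0_def intro!: AE_I2 tau_bound L2 Lm nu)
    with ae0 show ?thesis by eventually_elim simp
  next
    case False
    then have "nn_cond_exp M F (\<lambda>\<omega>. delay (nglr_tau est p0 m b \<omega>) \<nu>) = (\<lambda>_. 0)"
      by (simp add: nn_cond_exp_def)
    then show ?thesis by simp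
  qed
  have "esssup M (nn_cond_exp M F (\<lambda>\<omega>. delay (nglr_tau est p0 m b \<omega>) \<nu>)) \<le> c0"
    by (rule esssup_I[OF borel_measurable_nn_cond_exp2 ae1])
  then show ?thesis unfolding M_def F_def c0_def .
qed

lemma failb_restrict:
  assumes "{i*L..i*L+L-1} \<subseteq> K"
  shows "failb est p0 L b (restrict y K) i = failb est p0 L b y i"
proof -
  have "blk est p0 L (restrict y K) i = blk est p0 L y i"
    unfolding blk_def
    by (rule sum.cong[OF refl], rule Zhat_cong) (use assms in auto)
  then show ?thesis unfolding failb_def by simp
qed

lemma Gf_integral_bound:
  assumes d1: "is_density \<mu> p1"
    and est_meas: "\<And>L. (\<lambda>(f, x). est (map f [0..<L]) x) \<in> borel_measurable ((\<Pi>\<^sub>M j\<in>{0..<L}. \<mu>) \<Otimes>\<^sub>M \<mu>)"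
    and p0m: "p0 \<in> borel_measurable \<mu>"
    and L1: "1 \<le> L" and q0: "0 \<le> q" and q1: "q < 1"
    and fq: "\<And>j. emeasure (iid_law \<mu> p1) {y \<in> space (iid_law \<mu> p1). failb est p0 L b y j} \<le> ennreal q"
  shows "(\<integral>\<^sup>+ y. Gf est p0 L b y \<partial>iid_law \<mu> p1) \<le> ennreal (1 / (1 - q))"
proof -
  define N1 where "N1 = (\<lambda>_::nat. density \<mu> (\<lambda>x. ennreal (p1 x)))"
  define P where "P = iid_law \<mu> p1"
  have PN: "P = PiM UNIV N1" unfolding P_def iid_law_def N1_def by simp
  have PN1: "\<And>j. prob_space (N1 j)" unfolding N1_def using prob_space_dens[OF d1] by auto
  have sN: "\<And>j. sets (N1 j) = sets \<mu>" unfolding N1_def by simp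
  interpret prob_space P unfolding PN by (intro prob_space_PiM PN1)
  define D where "D j = {y \<in> space P. \<forall>i\<in>{..<j}. failb est p0 L b y i}" for j
  have predK: "Measurable.pred (PiM K N1) (\<lambda>y. \<forall>i\<in>I. failb est p0 L b y i)"
    if "finite I" "\<And>i. i \<in> I \<Longrightarrow> {i*L..i*L+L-1} \<subseteq> K" for I K
    by (rule pred_intros_finite(3)[OF that(1)], rule failb_meas[OF est_meas sN p0m that(2)]) auto
  have Dsets: "D j \<in> sets P" for j
  proof -
    have "Measurable.pred P (\<lambda>y. \<forall>i\<in>{..<j}. failb est p0 L b y i)"
      unfolding PN by (rule predK) auto
    then show ?thesis unfolding D_def pred_def .
  qed
  have Dbound: "emeasure P (D j) \<le> ennreal (q ^ j)" for j
  proof (induction j)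
    case 0
    show ?case by (simp add: D_def emeasure_space_1)
  next
    case (Suc j)
    define A' where "A' = {x \<in> space (PiM {..<j*L} N1). \<forall>i\<in>{..<j}. failb est p0 L b x i}"
    define B' where "B' = {x \<in> space (PiM {j*L..} N1). failb est p0 L b x j}"
    have blkA: "\<And>i. i \<in> {..<j} \<Longrightarrow> {i*L..i*L+L-1} \<subseteq> {..<j*L}"
    proof -
      fix i assume "i \<in> {..<j}"
      then have "Suc i \<le> j" by simp
      then have "Suc i * L \<le> j * L" by (rule mult_right_mono) simp
      then show "{i*L..i*L+L-1} \<subseteq> {..<j*L}" using L1 by auto
    qed
    have A'm: "A' \<in> sets (PiM {..<j*L} N1)"
    proof -
      have "Measurable.pred (PiM {..<j*L} N1) (\<lambda>y. \<forall>i\<in>{..<j}. failb est p0 L b y i)"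
        by (rule predK, simp, erule blkA)
      then show ?thesis unfolding A'_def pred_def .
    qed
    have B'm: "B' \<in> sets (PiM {j*L..} N1)"
    proof -
      have "Measurable.pred (PiM {j*L..} N1) (\<lambda>y. failb est p0 L b y j)"
        by (rule failb_meas[OF est_meas sN p0m]) auto
      then show ?thesis unfolding B'_def pred_def .
    qed
    define F where "F = {y \<in> space P. failb est p0 L b y j}"
    have Fsets: "F \<in> sets P"
    proof -
      have "Measurable.pred P (\<lambda>y. failb est p0 L b y j)"
        unfolding PN by (rule failb_meas[OF est_meas sN p0m]) auto
      then show ?thesis unfolding F_def pred_def .
    qed
    have "emeasure P (D (Suc j)) = (\<integral>\<^sup>+y. indicator (D (Suc j)) y \<partial>P)"
      using Dsets by simp
    also have "\<dots> = (\<integral>\<^sup>+y. indicator A' (restrict y {..<j*L}) * indicator B' (restrict y {j*L..}) \<partial>P)"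
    proof (rule nn_integral_cong)
      fix y assume y: "y \<in> space P"
      have r1: "restrict y {..<j*L} \<in> space (PiM {..<j*L} N1)" using y unfolding PN by (auto simp: space_PiM)
      have r2: "restrict y {j*L..} \<in> space (PiM {j*L..} N1)" using y unfolding PN by (auto simp: space_PiM)
      have e1: "(\<forall>i\<in>{..<j}. failb est p0 L b (restrict y {..<j*L}) i) = (\<forall>i\<in>{..<j}. failb est p0 L b y i)"
      proof -
        have "\<And>i. i \<in> {..<j} \<Longrightarrow> failb est p0 L b (restrict y {..<j*L}) i = failb est p0 L b y i"
          by (rule failb_restrict[OF blkA])
        then show ?thesis by auto
      qed
      have e2: "failb est p0 L b (restrict y {j*L..}) j = failb est p0 L b y j"
        by (rule failb_restrict) auto
      have "(\<forall>i\<in>{..<Suc j}. failb est p0 L b y i) = ((\<forall>i\<in>{..<j}. failb est p0 L b y i) \<and> failb est p0 L b y j)"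
        using less_Suc_eq by auto
      then show "(indicator (D (Suc j)) y :: ennreal) = indicator A' (restrict y {..<j*L}) * indicator B' (restrict y {j*L..})"
        using y r1 r2 e1 e2 unfolding D_def A'_def B'_def by (simp add: indicator_def)
    qed
    also have "\<dots> = (\<integral>\<^sup>+y. indicator A' (restrict y {..<j*L}) \<partial>P) * (\<integral>\<^sup>+y. indicator B' (restrict y {j*L..}) \<partial>P)"
      unfolding PN by (rule PiM_indep_nn[OF PN1]) (auto intro: borel_measurable_indicator[OF A'm] borel_measurable_indicator[OF B'm])
    also have "(\<integral>\<^sup>+y. indicator A' (restrict y {..<j*L}) \<partial>P) = (\<integral>\<^sup>+y. indicator (D j) y \<partial>P)"
    proof (rule nn_integral_cong)
      fix y assume y: "y \<in> space P"
      have r1: "restrict y {..<j*L} \<in> space (PiM {..<j*L} N1)" using y unfolding PN by (auto simp: space_PiM)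
      have e1: "(\<forall>i\<in>{..<j}. failb est p0 L b (restrict y {..<j*L}) i) = (\<forall>i\<in>{..<j}. failb est p0 L b y i)"
      proof -
        have "\<And>i. i \<in> {..<j} \<Longrightarrow> failb est p0 L b (restrict y {..<j*L}) i = failb est p0 L b y i"
          by (rule failb_restrict[OF blkA])
        then show ?thesis by auto
      qed
      show "(indicator A' (restrict y {..<j*L}) :: ennreal) = indicator (D j) y"
        using y r1 e1 unfolding D_def A'_def by (simp add: indicator_def)
    qed
    also have "\<dots> = emeasure P (D j)" using Dsets by simp
    also have "(\<integral>\<^sup>+y. indicator B' (restrict y {j*L..}) \<partial>P) = (\<integral>\<^sup>+y. indicator F y \<partial>P)"
    proof (rule nn_integral_cong)
      fix y assume y: "y \<in> space P"
      have r2: "restrict y {j*L..} \<in> space (PiM {j*L..} N1)" using y unfolding PN by (auto simp: space_PiM)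
      have e2: "failb est p0 L b (restrict y {j*L..}) j = failb est p0 L b y j"
        by (rule failb_restrict) auto
      show "(indicator B' (restrict y {j*L..}) :: ennreal) = indicator F y"
        using y r2 e2 unfolding F_def B'_def by (simp add: indicator_def)
    qed
    also have "\<dots> = emeasure P F" using Fsets by simp
    also have "emeasure P (D j) * emeasure P F \<le> ennreal (q ^ j) * ennreal q"
      using Suc.IH fq[of j] unfolding F_def P_def by (intro mult_mono) auto
    also have "\<dots> = ennreal (q ^ Suc j)" using q0 by (simp add: ennreal_mult[symmetric] mult.commute)
    finally show ?case .
  qed
  have "(\<integral>\<^sup>+ y. Gf est p0 L b y \<partial>P) = (\<integral>\<^sup>+ y. (\<Sum>j. indicator (D j) y) \<partial>P)"
    by (rule nn_integral_cong) (simp add: Gf_def D_def indicator_def of_bool_def Ball_def lessThan_iff)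
  also have "\<dots> = (\<Sum>j. \<integral>\<^sup>+ y. indicator (D j) y \<partial>P)"
    by (rule nn_integral_suminf) (rule borel_measurable_indicator[OF Dsets])
  also have "\<dots> = (\<Sum>j. emeasure P (D j))" using Dsets by simp
  also have "\<dots> \<le> (\<Sum>j. ennreal (q ^ j))"
    by (intro suminf_le Dbound) (auto intro: summableI)
  also have "\<dots> = ennreal (\<Sum>j. q ^ j)"
    using q0 q1 by (intro suminf_ennreal2) auto
  also have "(\<Sum>j. q ^ j) = 1 / (1 - q)"
    using q0 q1 by (intro suminf_geometric) auto
  finally show ?thesis unfolding P_def .
qed

lemma core_ereal:
  fixes Z R Zh :: "nat \<Rightarrow> ereal" and A :: "nat set"
  assumes fin: "finite A" and Lpos: "0 < Lr" and dpos: "0 < \<delta>"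
   and Rn: "\<forall>i\<in>A. R i \<noteq> -\<infinity>"
   and eq: "\<forall>i\<in>A. R i \<noteq> \<infinity> \<longrightarrow> Zh i + R i = Z i"
   and hS: "\<not> (ereal (\<delta>\<^sup>2) \<le> (ereal (1/Lr) * sum R A) * (ereal (1/Lr) * sum R A))"
   and hZ: "\<not> (sum Z A \<le> ereal a)"
   and hb: "b + \<delta> * Lr \<le> a"
  shows "ereal b \<le> sum Zh A"
proof -
  have Rinf: "\<forall>i\<in>A. R i \<noteq> \<infinity>"
  proof (rule ccontr)
    assume "\<not> (\<forall>i\<in>A. R i \<noteq> \<infinity>)"
    then have "sum R A = \<infinity>" using fin by (simp add: sum_Pinfty)
    then have e: "ereal (1/Lr) * sum R A = \<infinity>" using Lpos by simp
    have "ereal (\<delta>\<^sup>2) \<le> (ereal (1/Lr) * sum R A) * (ereal (1/Lr) * sum R A)"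
      by (simp only: e) simp
    then show False using hS by blast
  qed
  define r where "r i = real_of_ereal (R i)" for i
  have Rr: "\<forall>i\<in>A. R i = ereal (r i)" 
  proof
    fix i assume "i \<in> A"
    then show "R i = ereal (r i)" using Rinf Rn unfolding r_def by (cases "R i") auto
  qed
  have sR: "sum R A = ereal (sum r A)" using Rr by (simp cong: sum.cong)
  have rlt: "sum r A < \<delta> * Lr"
  proof (rule ccontr)
    assume "\<not> sum r A < \<delta> * Lr"
    then have "\<delta> \<le> sum r A / Lr" using Lpos by (simp add: field_simps)
    then have "\<delta> * \<delta> \<le> (sum r A / Lr) * (sum r A / Lr)" using dpos by (intro mult_mono) auto
    then show False using hS sR by (simp add: power2_eq_square)
  qed
  have "sum Zh A + sum R A = sum Z A"
    unfolding sum.distrib[symmetric] using eq Rinf by (intro sum.cong) auto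
  then have eqs: "sum Zh A + ereal (sum r A) = sum Z A" using sR by simp
  show ?thesis
  proof (cases "sum Zh A")
    case (real z)
    then have "ereal a < ereal (z + sum r A)" using eqs hZ by simp
    then show ?thesis using real rlt hb by simp
  next
    case PInf then show ?thesis by simp
  next
    case MInf
    then have "sum Z A = -\<infinity>" using eqs by simp
    then show ?thesis using hZ by simp
  qed
qed

lemma llr_terms:
  assumes "0 < x1" "0 \<le> xh" "0 \<le> x0"
  shows "llr x1 xh \<noteq> -\<infinity>" and "llr x1 xh \<noteq> \<infinity> \<Longrightarrow> llr xh x0 + llr x1 xh = llr x1 x0"
proof -
  show "llr x1 xh \<noteq> -\<infinity>" using assms unfolding llr_def by auto
  assume h: "llr x1 xh \<noteq> \<infinity>"
  then have xh: "0 < xh" using assms unfolding llr_def by (auto split: if_splits)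
  show "llr xh x0 + llr x1 xh = llr x1 x0"
  proof (cases "0 < x0")
    case True
    then show ?thesis using xh assms unfolding llr_def by (simp add: ln_div)
  next
    case False
    then show ?thesis using xh assms unfolding llr_def by simp
  qed
qed

lemma space_law: "space (law \<mu> p0 p1 \<nu>) = space (iid_law \<mu> p1)"
  unfolding law_def iid_law_def space_PiM by (intro PiE_cong) auto

lemma blk_shift1:
  assumes "1 \<le> L"
  shows "blk est p0 L (\<lambda>t. \<omega> (t + 1)) j = (\<Sum>i=j*L+1..j*L+L. Zhat est p0 \<omega> (j*L+L) (j*L+1) i)"
proof -
  have "blk est p0 L (\<lambda>t. \<omega> (t + 1)) j = (\<Sum>i=j*L..j*L+L-1. Zhat est p0 \<omega> (j*L+L-1+1) (j*L+1) (i + 1))"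
    unfolding blk_def Zhat_shift by simp
  also have "\<dots> = (\<Sum>i=j*L+1..j*L+L-1+1. Zhat est p0 \<omega> (j*L+L-1+1) (j*L+1) i)"
    using sum.shift_bounds_cl_nat_ivl[of "\<lambda>i. Zhat est p0 \<omega> (j*L+L-1+1) (j*L+1) i" "j*L" 1 "j*L+L-1"] by simp
  finally show ?thesis
    using assms by simp
qed

lemma fail_prob:
  assumes sets_mu: "sets \<mu> = sets borel"
    and d0: "is_density \<mu> p0" and d1: "is_density \<mu> p1"
    and est_dens: "\<And>xs. is_density \<mu> (est xs)"
    and est_meas: "\<And>L. (\<lambda>(f, x). est (map f [0..<L]) x) \<in> borel_measurable ((\<Pi>\<^sub>M j\<in>{0..<L}. \<mu>) \<Otimes>\<^sub>M \<mu>)"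
    and L2: "2 \<le> L" and dpos: "0 < \<delta>" and hb: "b + \<delta> * real L \<le> a"
    and kdef: "k = j*L+1" and ndef: "n = j*L+L"
    and B0: "0 \<le> B"
    and rate: "(\<integral>\<^sup>+ \<omega>. e2ennreal
               (let S = ereal (1 / real (n - k + 1)) *
                        (\<Sum>i=k..n. llr (p1 (\<omega> i)) (loo_est est \<omega> n k i (\<omega> i)))
                in S * S) \<partial>iid_law \<mu> p1) \<le> ennreal B"
  shows "emeasure (iid_law \<mu> p1) {y \<in> space (iid_law \<mu> p1). failb est p0 L b y j}
     \<le> emeasure (law \<mu> p0 p1 1) {\<omega> \<in> space (law \<mu> p0 p1 1).
            (\<Sum>i=k..k+(L-1). llr (p1 (\<omega> i)) (p0 (\<omega> i))) \<le> ereal a}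
       + ennreal (B / \<delta>\<^sup>2)"
proof -
  define P where "P = iid_law \<mu> p1"
  define N1 where "N1 = (\<lambda>_::nat. density \<mu> (\<lambda>x. ennreal (p1 x)))"
  have PN: "P = PiM UNIV N1" unfolding P_def iid_law_def N1_def by simp
  have PN1: "\<And>j. prob_space (N1 j)" unfolding N1_def using prob_space_dens[OF d1] by auto
  have sN: "\<And>j. sets (N1 j) = sets \<mu>" unfolding N1_def by simp
  interpret prob_space P unfolding PN by (intro prob_space_PiM PN1)
  have p0m[measurable]: "p0 \<in> borel_measurable \<mu>" using d0 by (simp add: is_density_def)
  have p1m[measurable]: "p1 \<in> borel_measurable \<mu>" using d1 by (simp add: is_density_def)
  have comp[measurable]: "\<And>i. (\<lambda>\<omega>. \<omega> i) \<in> measurable P \<mu>"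
    unfolding PN by (rule meas_sets_cong[OF measurable_component_singleton]) (auto simp: sN)
  have L1: "1 \<le> L" using L2 by simp
  define S where "S \<omega> = ereal (1 / real (n - k + 1)) * (\<Sum>i=k..n. llr (p1 (\<omega> i)) (loo_est est \<omega> n k i (\<omega> i)))" for \<omega>
  define SZ where "SZ \<omega> = (\<Sum>i=k..k+(L-1). llr (p1 (\<omega> i)) (p0 (\<omega> i)))" for \<omega>
  have nk: "n - k + 1 = L" "k + (L - 1) = n" using L2 unfolding kdef ndef by auto
  have Rm: "\<And>i. i \<in> {k..n} \<Longrightarrow> (\<lambda>\<omega>. llr (p1 (\<omega> i)) (loo_est est \<omega> n k i (\<omega> i))) \<in> borel_measurable P"
  proof -
    fix i assume i: "i \<in> {k..n}"
    have [measurable]: "(\<lambda>\<omega>. loo_est est \<omega> n k i (\<omega> i)) \<in> borel_measurable P"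
      unfolding PN by (rule loo_meas[OF est_meas _ _ i]) (auto simp: sN)
    show "(\<lambda>\<omega>. llr (p1 (\<omega> i)) (loo_est est \<omega> n k i (\<omega> i))) \<in> borel_measurable P" by measurable
  qed
  have [measurable]: "(\<lambda>\<omega>. \<Sum>i=k..n. llr (p1 (\<omega> i)) (loo_est est \<omega> n k i (\<omega> i))) \<in> borel_measurable P"
    by (rule borel_measurable_ereal_sum[OF Rm])
  have Sm[measurable]: "S \<in> borel_measurable P" unfolding S_def by measurable
  have SZm[measurable]: "SZ \<in> borel_measurable P" unfolding SZ_def by measurable
  define E1 where "E1 = {\<omega> \<in> space P. SZ \<omega> \<le> ereal a}"
  define E2 where "E2 = {\<omega> \<in> space P. ereal (\<delta>\<^sup>2) \<le> S \<omega> * S \<omega>}"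
  have E1m: "E1 \<in> sets P" unfolding E1_def by measurable
  have E2m: "E2 \<in> sets P" unfolding E2_def by measurable
  have Fm: "{y \<in> space P. failb est p0 L b y j} \<in> sets P"
  proof -
    have "Measurable.pred P (\<lambda>y. failb est p0 L b y j)"
      unfolding PN by (rule failb_meas[OF est_meas sN p0m]) auto
    then show ?thesis unfolding pred_def .
  qed
  have shm: "(\<lambda>\<omega> t. \<omega> (t + 1)) \<in> measurable P P"
    using shift_meas[OF d0 d1, of 0 1] unfolding P_def iid_law_eq[of \<mu> p1 p0] by simp
  have step1: "emeasure P {y \<in> space P. failb est p0 L b y j} = emeasure P {\<omega> \<in> space P. failb est p0 L b (\<lambda>t. \<omega> (t + 1)) j}"
  proof -
    have "emeasure (law \<mu> p0 p1 0) {\<omega> \<in> space (law \<mu> p0 p1 0). (\<lambda>t. \<omega> (t + 1)) \<in> {y \<in> space P. failb est p0 L b y j}}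
        = emeasure P {y \<in> space P. failb est p0 L b y j}"
      unfolding P_def by (rule law_shift_emeasure[OF d0 d1 _ Fm[unfolded P_def]]) simp
    moreover have "{\<omega> \<in> space (law \<mu> p0 p1 0). (\<lambda>t. \<omega> (t + 1)) \<in> {y \<in> space P. failb est p0 L b y j}}
        = {\<omega> \<in> space P. failb est p0 L b (\<lambda>t. \<omega> (t + 1)) j}"
      using measurable_space[OF shm] unfolding P_def iid_law_eq[of \<mu> p1 p0, symmetric] by auto
    ultimately show ?thesis unfolding P_def iid_law_eq[of \<mu> p1 p0, symmetric] by simp
  qed
  have pos: "AE \<omega> in P. \<forall>i\<in>{k..n}. 0 < p1 (\<omega> i)"
  proof (rule eventually_ball_finite)
    show "finite {k..n}" by simp
    show "\<forall>i\<in>{k..n}. AE \<omega> in P. 0 < p1 (\<omega> i)"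
    proof
      fix i :: nat
      have "AE x in N1 i. 0 < p1 x"
        unfolding N1_def by (subst AE_density) (auto simp: ennreal_neg intro!: AE_I2)
      then show "AE \<omega> in P. 0 < p1 (\<omega> i)"
        unfolding PN using AE_PiM_component[of UNIV N1 i "\<lambda>x. 0 < p1 x"] PN1 by blast
    qed
  qed
  have incl: "AE \<omega> in P. \<omega> \<in> {\<omega> \<in> space P. failb est p0 L b (\<lambda>t. \<omega> (t + 1)) j} \<longrightarrow> \<omega> \<in> E1 \<union> E2"
    using pos
  proof eventually_elim
    case (elim \<omega>)
    show ?case
    proof (intro impI, rule ccontr)
      assume F: "\<omega> \<in> {\<omega> \<in> space P. failb est p0 L b (\<lambda>t. \<omega> (t + 1)) j}" and nE: "\<omega> \<notin> E1 \<union> E2"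
      have \<omega>: "\<omega> \<in> space P" using F by simp
      have sp: "\<And>i. \<omega> i \<in> space \<mu>" using \<omega> unfolding PN N1_def by (auto simp: space_PiM)
      have hZ: "\<not> (SZ \<omega> \<le> ereal a)" using nE \<omega> unfolding E1_def by auto
      have hS: "\<not> (ereal (\<delta>\<^sup>2) \<le> S \<omega> * S \<omega>)" using nE \<omega> unfolding E2_def by auto
      have estpos: "\<And>xs x. x \<in> space \<mu> \<Longrightarrow> 0 \<le> est xs x" using est_dens by (simp add: is_density_def)
      have p0pos: "\<And>x. x \<in> space \<mu> \<Longrightarrow> 0 \<le> p0 x" using d0 by (simp add: is_density_def)
      have "ereal b \<le> (\<Sum>i\<in>{k..n}. Zhat est p0 \<omega> n k i)"
      proof (rule core_ereal[where R="\<lambda>i. llr (p1 (\<omega> i)) (loo_est est \<omega> n k i (\<omega> i))"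
                              and Z="\<lambda>i. llr (p1 (\<omega> i)) (p0 (\<omega> i))" and Lr="real L" and \<delta>=\<delta> and a=a])
        show "finite {k..n}" by simp
        show "0 < real L" using L2 by simp
        show "0 < \<delta>" by (rule dpos)
        show "\<forall>i\<in>{k..n}. llr (p1 (\<omega> i)) (loo_est est \<omega> n k i (\<omega> i)) \<noteq> - \<infinity>"
        proof
          fix i assume i: "i \<in> {k..n}"
          show "llr (p1 (\<omega> i)) (loo_est est \<omega> n k i (\<omega> i)) \<noteq> - \<infinity>"
            by (rule llr_terms(1)[of _ _ 1]) (use elim i in \<open>auto simp: loo_est_def intro!: estpos sp\<close>)
        qed
        show "\<forall>i\<in>{k..n}. llr (p1 (\<omega> i)) (loo_est est \<omega> n k i (\<omega> i)) \<noteq> \<infinity> \<longrightarrow>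
            Zhat est p0 \<omega> n k i + llr (p1 (\<omega> i)) (loo_est est \<omega> n k i (\<omega> i)) = llr (p1 (\<omega> i)) (p0 (\<omega> i))"
        proof (intro ballI impI)
          fix i assume i: "i \<in> {k..n}" and ni: "llr (p1 (\<omega> i)) (loo_est est \<omega> n k i (\<omega> i)) \<noteq> \<infinity>"
          show "Zhat est p0 \<omega> n k i + llr (p1 (\<omega> i)) (loo_est est \<omega> n k i (\<omega> i)) = llr (p1 (\<omega> i)) (p0 (\<omega> i))"
            unfolding Zhat_def
            by (rule llr_terms(2)[OF _ _ _ ni]) (use elim i in \<open>auto simp: loo_est_def intro!: estpos sp p0pos\<close>)
        qed
        show "\<not> ereal (\<delta>\<^sup>2) \<le> ereal (1 / real L) * (\<Sum>i\<in>{k..n}. llr (p1 (\<omega> i)) (loo_est est \<omega> n k i (\<omega> i))) *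
            (ereal (1 / real L) * (\<Sum>i\<in>{k..n}. llr (p1 (\<omega> i)) (loo_est est \<omega> n k i (\<omega> i))))"
          using hS unfolding S_def nk(1) .
        show "\<not> (\<Sum>i\<in>{k..n}. llr (p1 (\<omega> i)) (p0 (\<omega> i))) \<le> ereal a"
          using hZ unfolding SZ_def nk(2) .
        show "b + \<delta> * real L \<le> a" by (rule hb)
      qed
      moreover have "failb est p0 L b (\<lambda>t. \<omega> (t + 1)) j" using F by simp
      then have "(\<Sum>i\<in>{k..n}. Zhat est p0 \<omega> n k i) < ereal b"
        unfolding failb_def blk_shift1[OF L1] kdef ndef by simp
      ultimately show False by simp
    qed
  qed
  have "emeasure P {y \<in> space P. failb est p0 L b y j} \<le> emeasure P (E1 \<union> E2)"
    unfolding step1 by (rule emeasure_mono_AE[OF incl]) (use E1m E2m in auto)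
  also have "\<dots> \<le> emeasure P E1 + emeasure P E2"
    by (rule emeasure_subadditive[OF E1m E2m])
  also have "emeasure P E1 = emeasure (law \<mu> p0 p1 1) {\<omega> \<in> space (law \<mu> p0 p1 1). SZ \<omega> \<le> ereal a}"
  proof -
    define F' where "F' = {y \<in> space P. (\<Sum>i=k-1..k-1+(L-1). llr (p1 (y i)) (p0 (y i))) \<le> ereal a}"
    have F'm: "F' \<in> sets P" unfolding F'_def by measurable
    have k1: "1 \<le> k" unfolding kdef by simp
    have re: "\<And>\<omega>. (\<Sum>i=k-1..k-1+(L-1). llr (p1 (\<omega> (i + 1))) (p0 (\<omega> (i + 1)))) = SZ \<omega>"
    proof -
      fix \<omega> :: "nat \<Rightarrow> 'a"
      have "(\<Sum>i=k-1..k-1+(L-1). llr (p1 (\<omega> (i + 1))) (p0 (\<omega> (i + 1))))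
          = (\<Sum>i=k-1+1..k-1+(L-1)+1. llr (p1 (\<omega> i)) (p0 (\<omega> i)))"
        using sum.shift_bounds_cl_nat_ivl[of "\<lambda>i. llr (p1 (\<omega> i)) (p0 (\<omega> i))" "k-1" 1 "k-1+(L-1)"] by simp
      also have "\<dots> = SZ \<omega>"
      proof -
        have b1: "k-1+1 = k" "k-1+(L-1)+1 = k+(L-1)" using k1 by auto
        show ?thesis unfolding SZ_def b1 ..
      qed
      finally show "(\<Sum>i=k-1..k-1+(L-1). llr (p1 (\<omega> (i + 1))) (p0 (\<omega> (i + 1)))) = SZ \<omega>" .
    qed
    have set_eq: "{\<omega> \<in> space P. (\<lambda>t. \<omega> (t + 1)) \<in> F'} = {\<omega> \<in> space P. SZ \<omega> \<le> ereal a}"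
    proof -
      have "\<And>\<omega>. \<omega> \<in> space P \<Longrightarrow> (\<lambda>t. \<omega> (t + 1)) \<in> space P" using measurable_space[OF shm] by auto
      then show ?thesis unfolding F'_def using re by auto
    qed
    have sp1: "space (law \<mu> p0 p1 1) = space P" by (simp add: space_law P_def)
    have "emeasure P E1 = emeasure P {\<omega> \<in> space P. (\<lambda>t. \<omega> (t + 1)) \<in> F'}"
      unfolding set_eq E1_def ..
    also have "\<dots> = emeasure P F'"
    proof -
      have X: "emeasure (law \<mu> p0 p1 0) {\<omega> \<in> space (law \<mu> p0 p1 0). (\<lambda>n. \<omega> (n + 1)) \<in> F'} = emeasure P F'"
        unfolding P_def by (rule law_shift_emeasure[OF d0 d1 _ F'm[unfolded P_def]]) simp
      have l0: "law \<mu> p0 p1 0 = P" unfolding P_def iid_law_eq[of \<mu> p1 p0] ..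
      show ?thesis using X unfolding l0 .
    qed
    also have "\<dots> = emeasure (law \<mu> p0 p1 1) {\<omega> \<in> space (law \<mu> p0 p1 1). (\<lambda>t. \<omega> (t + 1)) \<in> F'}"
    proof -
      have X: "emeasure (law \<mu> p0 p1 1) {\<omega> \<in> space (law \<mu> p0 p1 1). (\<lambda>n. \<omega> (n + 1)) \<in> F'} = emeasure P F'"
        unfolding P_def by (rule law_shift_emeasure[OF d0 d1 _ F'm[unfolded P_def]]) simp
      then show ?thesis by simp
    qed
    also have "\<dots> = emeasure (law \<mu> p0 p1 1) {\<omega> \<in> space (law \<mu> p0 p1 1). SZ \<omega> \<le> ereal a}"
      unfolding sp1 set_eq ..
    finally show ?thesis .
  qed
  also have "emeasure P E2 \<le> ennreal (B / \<delta>\<^sup>2)"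
  proof -
    have "emeasure P E2 * ennreal (\<delta>\<^sup>2) = (\<integral>\<^sup>+\<omega>. ennreal (\<delta>\<^sup>2) * indicator E2 \<omega> \<partial>P)"
      using nn_integral_cmult_indicator[OF E2m, of "ennreal (\<delta>\<^sup>2)"] by (simp add: mult.commute)
    also have "\<dots> \<le> (\<integral>\<^sup>+\<omega>. e2ennreal (S \<omega> * S \<omega>) \<partial>P)"
    proof (rule nn_integral_mono)
      fix \<omega> assume "\<omega> \<in> space P"
      show "ennreal (\<delta>\<^sup>2) * indicator E2 \<omega> \<le> e2ennreal (S \<omega> * S \<omega>)"
      proof (cases "\<omega> \<in> E2")
        case True
        then have "ereal (\<delta>\<^sup>2) \<le> S \<omega> * S \<omega>" unfolding E2_def by simp
        then have "e2ennreal (ereal (\<delta>\<^sup>2)) \<le> e2ennreal (S \<omega> * S \<omega>)" by (rule e2ennreal_mono)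
        then show ?thesis using True by simp
      qed simp
    qed
    also have "\<dots> \<le> ennreal B" using rate unfolding P_def S_def Let_def .
    finally have h: "emeasure P E2 * ennreal (\<delta>\<^sup>2) \<le> ennreal B" .
    have "ennreal (measure P E2 * \<delta>\<^sup>2) \<le> ennreal B"
      using h by (simp add: emeasure_eq_measure ennreal_mult'')
    then have "measure P E2 * \<delta>\<^sup>2 \<le> B" using B0 by simp
    then have "measure P E2 \<le> B / \<delta>\<^sup>2" using dpos by (simp add: field_simps)
    then show ?thesis by (simp add: emeasure_eq_measure ennreal_leI)
  qed
  finally show ?thesis unfolding P_def SZ_def by (simp add: add_left_mono)
qed

lemma P2lim:
  assumes "0 < \<beta>" "0 < d"
  shows "((\<lambda>n::nat. C / (real n powr \<beta> * d)) \<longlongrightarrow> 0) sequentially"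
proof -
  have "((\<lambda>n::nat. real n powr (-\<beta>)) \<longlongrightarrow> 0) sequentially"
    by (rule tendsto_neg_powr) (use assms in \<open>simp_all add: filterlim_real_sequentially\<close>)
  then have "((\<lambda>n::nat. (C / d) * real n powr (-\<beta>)) \<longlongrightarrow> 0) sequentially"
    by (rule tendsto_mult_right_zero)
  moreover have "\<forall>\<^sub>F n in sequentially. (C / d) * real n powr (-\<beta>) = C / (real n powr \<beta> * d)"
    using eventually_gt_at_top[of 0] by eventually_elim (simp add: powr_minus divide_simps)
  ultimately show ?thesis by (rule Lim_transform_eventually)
qed

theorem lemma3:
  fixes \<mu> :: "'a::euclidean_space measure"
    and p0 p1 :: "'a \<Rightarrow> real"
    and est :: "'a list \<Rightarrow> 'a \<Rightarrow> real"
    and m :: "real \<Rightarrow> nat"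
    and I \<eta> :: real
  assumes sets_mu: "sets \<mu> = sets borel"
    and dens0: "is_density \<mu> p0" and dens1: "is_density \<mu> p1"
    and est_dens: "\<And>xs. is_density \<mu> (est xs)"
    and est_meas: "\<And>L. (\<lambda>(f, x). est (map f [0..<L]) x)
                          \<in> borel_measurable ((\<Pi>\<^sub>M j\<in>{0..<L}. \<mu>) \<Otimes>\<^sub>M \<mu>)"
    and I_def: "KL \<mu> p1 p0 = ereal I" and I_pos: "0 < I"
    and eta: "1 < \<eta>"
    and window: "Liminf at_top (\<lambda>b. ereal (real (m b) / b)) \<ge> ereal (\<eta> / I)"
    and est_rates: "\<exists>\<beta>1 C1 \<beta>2 C2 N. 0 < \<beta>1 \<and> 0 < C1 \<and> 0 < \<beta>2 \<and> \<beta>2 < 2 \<and> 0 < C2 \<and>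
        (\<forall>n k i. 1 \<le> k \<and> k \<le> i \<and> i \<le> n \<and> N \<le> n - k \<longrightarrow>
           (\<integral>\<^sup>+ \<omega>. e2ennreal (KL \<mu> p1 (loo_est est \<omega> n k i)) \<partial>iid_law \<mu> p1)
              \<le> ennreal (C1 / real (n - k) powr \<beta>1)) \<and>
        (\<forall>n k. 1 \<le> k \<and> k \<le> n \<and> N \<le> n - k \<longrightarrow>
           (\<integral>\<^sup>+ \<omega>. e2ennreal
               (let S = ereal (1 / real (n - k + 1)) *
                        (\<Sum>i=k..n. llr (p1 (\<omega> i)) (loo_est est \<omega> n k i (\<omega> i)))
                in S * S) \<partial>iid_law \<mu> p1)
              \<le> ennreal (C2 / real (n - k + 1) powr \<beta>2))"
    and Z_concentration: "\<And>\<delta> \<nu>. 0 < \<delta> \<Longrightarrow> \<delta> < 1 \<Longrightarrow> 1 \<le> \<nu> \<Longrightarrow>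
        (\<lambda>n. SUP t\<in>{\<nu>..}. measure (law \<mu> p0 p1 \<nu>)
              {\<omega> \<in> space (law \<mu> p0 p1 \<nu>).
                 (\<Sum>i=t..t+n. llr (p1 (\<omega> i)) (p0 (\<omega> i))) \<le> ereal ((1 - \<delta>) * real n * I)})
        \<longlonglongrightarrow> 0"
  shows "\<forall>\<epsilon>>0. \<forall>\<^sub>F b in at_top.
           WADD \<mu> p0 p1 (nglr_tau est p0 (m b) b) \<le> ennreal ((1 + \<epsilon>) * b / I)"
proof (intro allI impI)
  fix \<epsilon> :: real assume eps: "0 < \<epsilon>"
  obtain \<beta>1 C1 \<beta>2 C2 N where b2: "0 < \<beta>2" and C2: "0 < C2" and
    rate2: "\<And>n k. 1 \<le> k \<Longrightarrow> k \<le> n \<Longrightarrow> N \<le> n - k \<Longrightarrow>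
           (\<integral>\<^sup>+ \<omega>. e2ennreal
               (let S = ereal (1 / real (n - k + 1)) *
                        (\<Sum>i=k..n. llr (p1 (\<omega> i)) (loo_est est \<omega> n k i (\<omega> i)))
                in S * S) \<partial>iid_law \<mu> p1)
              \<le> ennreal (C2 / real (n - k + 1) powr \<beta>2)"
    using est_rates by blast
  define \<epsilon>1 where "\<epsilon>1 = min (\<epsilon>/3) ((\<eta> - 1)/2)"
  have e1pos: "0 < \<epsilon>1" using eps eta unfolding \<epsilon>1_def by simp
  have e1le: "\<epsilon>1 \<le> \<epsilon>/3" unfolding \<epsilon>1_def by (rule min.cobounded1)
  have e1eta: "1 + \<epsilon>1 < \<eta>"
  proof -
    have "\<epsilon>1 \<le> (\<eta> - 1) / 2" unfolding \<epsilon>1_def by (rule min.cobounded2)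
    moreover have "(\<eta> - 1) / 2 < \<eta> - 1" using eta by simp
    ultimately show ?thesis by linarith
  qed
  define \<delta> where "\<delta> = I * \<epsilon>1 / (2 * (1 + \<epsilon>1) * (I + 1))"
  have dpos: "0 < \<delta>" unfolding \<delta>_def using I_pos e1pos by simp
  have dI: "\<delta> * (I + 1) = I * \<epsilon>1 / (2 * (1 + \<epsilon>1))"
  proof -
    have "I + 1 \<noteq> 0" "1 + \<epsilon>1 \<noteq> 0" using I_pos e1pos by auto
    then show ?thesis unfolding \<delta>_def by (simp add: divide_simps)
  qed
  have dlt1: "\<delta> < 1"
  proof -
    have "\<delta> * (I + 1) < I + 1"
    proof -
      have "I * \<epsilon>1 / (2 * (1 + \<epsilon>1)) \<le> I * \<epsilon>1 / (1 + \<epsilon>1)"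
        using I_pos e1pos by (intro divide_left_mono) auto
      also have "\<dots> < I"
      proof -
        have "\<epsilon>1 / (1 + \<epsilon>1) < 1" using e1pos by simp
        then have "I * (\<epsilon>1 / (1 + \<epsilon>1)) < I * 1" using I_pos by (intro mult_strict_left_mono)
        then show ?thesis by simp
      qed
      finally show ?thesis unfolding dI by simp
    qed
    then show ?thesis using I_pos by simp
  qed
  define q0 where "q0 = \<epsilon> / (3 * (1 + \<epsilon>))"
  have q0pos: "0 < q0" unfolding q0_def using eps by simp
  have q0lt1: "q0 < 1" unfolding q0_def using eps by (simp add: field_simps)
  define g where "g n = (SUP t\<in>{1..}. measure (law \<mu> p0 p1 1)
              {\<omega> \<in> space (law \<mu> p0 p1 1).
                 (\<Sum>i=t..t+n. llr (p1 (\<omega> i)) (p0 (\<omega> i))) \<le> ereal ((1 - \<delta>) * real n * I)})" for n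
  have glim: "g \<longlonglongrightarrow> 0" unfolding g_def by (rule Z_concentration[OF dpos dlt1 order_refl])
  have ev1: "\<forall>\<^sub>F n in sequentially. g n < q0 / 2"
    using order_tendstoD(2)[OF glim, of "q0/2"] q0pos by simp
  have ev2: "\<forall>\<^sub>F n in sequentially. C2 / (real n powr \<beta>2 * \<delta>\<^sup>2) < q0 / 2"
    using order_tendstoD(2)[OF P2lim[OF b2, of "\<delta>\<^sup>2" C2], of "q0/2"] q0pos dpos by simp
  obtain n1 where n1: "\<And>n. n \<ge> n1 \<Longrightarrow> g n < q0 / 2" using ev1 unfolding eventually_sequentially by blast
  obtain n2 where n2: "\<And>n. n \<ge> n2 \<Longrightarrow> C2 / (real n powr \<beta>2 * \<delta>\<^sup>2) < q0 / 2"
    using ev2 unfolding eventually_sequentially by blast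
  define K where "K = n1 + n2 + N + 2"
  have evm: "\<forall>\<^sub>F b in at_top. ereal ((1 + \<epsilon>1) / I) < ereal (real (m b) / b)"
  proof (rule less_LiminfD)
    have "ereal ((1 + \<epsilon>1) / I) < ereal (\<eta> / I)" using e1eta I_pos by (simp add: divide_strict_right_mono)
    then show "ereal ((1 + \<epsilon>1) / I) < Liminf at_top (\<lambda>b. ereal (real (m b) / b))" using window by (rule less_le_trans)
  qed
  define B0 where "B0 = max 1 (max (2 * I / \<epsilon>1) (max (3 * I / \<epsilon>) (I * real K)))"
  have evb: "\<forall>\<^sub>F b in at_top. B0 \<le> b" by (rule eventually_ge_at_top)
  show "\<forall>\<^sub>F b in at_top. WADD \<mu> p0 p1 (nglr_tau est p0 (m b) b) \<le> ennreal ((1 + \<epsilon>) * b / I)"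
    using evm evb
  proof eventually_elim
    case (elim b)
    have bpos: "0 < b" and b1: "2 * I / \<epsilon>1 \<le> b" and b2': "3 * I / \<epsilon> \<le> b" and bK: "I * real K \<le> b"
      using elim(2) unfolding B0_def by auto
    define x where "x = (1 + \<epsilon>1) * b / I"
    define L where "L = nat \<lceil>x\<rceil>"
    have xpos: "0 < x" unfolding x_def using bpos I_pos e1pos by simp
    have Lx: "x \<le> real L" unfolding L_def by linarith
    have Lx1: "real L < x + 1" unfolding L_def using xpos by linarith
    have xK: "real K \<le> x"
    proof -
      have "real K \<le> b / I" using bK I_pos by (simp add: field_simps)
      also have "\<dots> \<le> x" unfolding x_def using bpos I_pos e1pos by (simp add: field_simps)
      finally show ?thesis .
    qed
    have LK: "K \<le> L" using xK Lx by linarith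
    have L2: "2 \<le> L" using LK unfolding K_def by simp
    have Lm: "L \<le> m b"
    proof -
      have "x < real (m b)" using elim(1) bpos I_pos unfolding x_def by (simp add: field_simps)
      then show ?thesis unfolding L_def by (simp add: nat_le_iff ceiling_le_iff)
    qed
    have hb: "b + \<delta> * real L \<le> (1 - \<delta>) * real (L - 1) * I"
    proof -
      have rL: "real (L - 1) = real L - 1" using L2 by simp
      have A: "(1 - \<delta>) * I - \<delta> = I - \<delta> * (I + 1)" by (simp add: algebra_simps)
      have "I - \<delta> * (I + 1) = I * (2 + \<epsilon>1) / (2 * (1 + \<epsilon>1))"
        unfolding dI using e1pos by (simp add: field_simps)
      then have A2: "(1 - \<delta>) * I - \<delta> = I * (2 + \<epsilon>1) / (2 * (1 + \<epsilon>1))" using A by simp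
      have Apos: "0 \<le> (1 - \<delta>) * I - \<delta>" unfolding A2 using I_pos e1pos by simp
      have "x * ((1 - \<delta>) * I - \<delta>) = b * (2 + \<epsilon>1) / 2"
      proof -
        have "I \<noteq> 0" "1 + \<epsilon>1 \<noteq> 0" using I_pos e1pos by auto
        then show ?thesis unfolding A2 x_def by (simp add: divide_simps) (simp add: algebra_simps)
      qed
      also have "\<dots> = b + b * \<epsilon>1 / 2" by (simp add: field_simps)
      also have "b * \<epsilon>1 / 2 \<ge> I" using b1 e1pos by (simp add: field_simps)
      then have "b + I \<le> b + b * \<epsilon>1 / 2" by simp
      finally have "b + I \<le> x * ((1 - \<delta>) * I - \<delta>)" by simp
      also have "\<dots> \<le> real L * ((1 - \<delta>) * I - \<delta>)" using Lx Apos by (intro mult_right_mono) auto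
      finally have "b + I \<le> real L * ((1 - \<delta>) * I - \<delta>)" .
      moreover have "(1 - \<delta>) * I \<le> I" using dpos I_pos by simp
      ultimately show ?thesis unfolding rL by (simp add: algebra_simps)
    qed
    have fq: "emeasure (iid_law \<mu> p1) {y \<in> space (iid_law \<mu> p1). failb est p0 L b y j} \<le> ennreal q0" for j
    proof -
      define k where "k = j * L + 1"
      define n where "n = j * L + L"
      have nk: "n - k + 1 = L" "n - k = L - 1" "1 \<le> k" "k \<le> n" using L2 unfolding n_def k_def by auto
      have NL: "N \<le> n - k" unfolding nk using LK unfolding K_def by simp
      have r: "(\<integral>\<^sup>+ \<omega>. e2ennreal
               (let S = ereal (1 / real (n - k + 1)) *
                        (\<Sum>i=k..n. llr (p1 (\<omega> i)) (loo_est est \<omega> n k i (\<omega> i)))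
                in S * S) \<partial>iid_law \<mu> p1) \<le> ennreal (C2 / real (n - k + 1) powr \<beta>2)"
        by (rule rate2[OF nk(3) nk(4) NL])
      have fp: "emeasure (iid_law \<mu> p1) {y \<in> space (iid_law \<mu> p1). failb est p0 L b y j}
         \<le> emeasure (law \<mu> p0 p1 1) {\<omega> \<in> space (law \<mu> p0 p1 1).
            (\<Sum>i=k..k+(L-1). llr (p1 (\<omega> i)) (p0 (\<omega> i))) \<le> ereal ((1 - \<delta>) * real (L - 1) * I)}
         + ennreal ((C2 / real (n - k + 1) powr \<beta>2) / \<delta>\<^sup>2)"
        by (rule fail_prob[OF sets_mu dens0 dens1 est_dens est_meas L2 dpos hb k_def n_def _ r]) (use C2 in simp)
      interpret L1: prob_space "law \<mu> p0 p1 1"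
        unfolding law_def using prob_space_dens[OF dens0] prob_space_dens[OF dens1]
        by (intro prob_space_PiM) auto
      have m1: "measure (law \<mu> p0 p1 1) {\<omega> \<in> space (law \<mu> p0 p1 1).
            (\<Sum>i=k..k+(L-1). llr (p1 (\<omega> i)) (p0 (\<omega> i))) \<le> ereal ((1 - \<delta>) * real (L - 1) * I)} \<le> g (L - 1)"
        unfolding g_def
        by (rule cSUP_upper) (use nk(3) in simp, rule bdd_aboveI[where M=1], erule imageE, simp only:, rule L1.prob_le_1)
      have gL: "g (L - 1) < q0 / 2" using LK unfolding K_def by (intro n1) simp
      have c2: "(C2 / real (n - k + 1) powr \<beta>2) / \<delta>\<^sup>2 < q0 / 2"
        unfolding nk(1) using n2[of L] LK unfolding K_def by (simp add: field_simps)
      have "emeasure (law \<mu> p0 p1 1) {\<omega> \<in> space (law \<mu> p0 p1 1).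
            (\<Sum>i=k..k+(L-1). llr (p1 (\<omega> i)) (p0 (\<omega> i))) \<le> ereal ((1 - \<delta>) * real (L - 1) * I)}
         \<le> ennreal (q0 / 2)"
      proof -
        have "emeasure (law \<mu> p0 p1 1) {\<omega> \<in> space (law \<mu> p0 p1 1).
            (\<Sum>i=k..k+(L-1). llr (p1 (\<omega> i)) (p0 (\<omega> i))) \<le> ereal ((1 - \<delta>) * real (L - 1) * I)}
          = ennreal (measure (law \<mu> p0 p1 1) {\<omega> \<in> space (law \<mu> p0 p1 1).
            (\<Sum>i=k..k+(L-1). llr (p1 (\<omega> i)) (p0 (\<omega> i))) \<le> ereal ((1 - \<delta>) * real (L - 1) * I)})"
          by (rule L1.emeasure_eq_measure)
        also have "\<dots> \<le> ennreal (q0 / 2)" by (rule ennreal_leI) (use m1 gL in linarith)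
        finally show ?thesis .
      qed
      moreover have "ennreal ((C2 / real (n - k + 1) powr \<beta>2) / \<delta>\<^sup>2) \<le> ennreal (q0 / 2)"
        using c2 by (intro ennreal_leI) simp
      ultimately have "emeasure (iid_law \<mu> p1) {y \<in> space (iid_law \<mu> p1). failb est p0 L b y j} \<le> ennreal (q0 / 2) + ennreal (q0 / 2)"
        using fp by (meson add_mono order_trans)
      also have "\<dots> = ennreal q0" using q0pos by (simp add: ennreal_plus[symmetric] del: ennreal_plus)
      finally show ?thesis .
    qed
    have p0m: "p0 \<in> borel_measurable \<mu>" using dens0 by (simp add: is_density_def)
    have intb: "(\<integral>\<^sup>+ y. Gf est p0 L b y \<partial>iid_law \<mu> p1) \<le> ennreal (1 / (1 - q0))"
      by (rule Gf_integral_bound[OF dens1 est_meas p0m _ _ q0lt1 fq]) (use L2 q0pos in auto)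
    have "WADD \<mu> p0 p1 (nglr_tau est p0 (m b) b) \<le> of_nat L * ennreal (1 / (1 - q0))"
      unfolding WADD_def
    proof (rule SUP_least)
      fix \<nu> :: nat assume "\<nu> \<in> {1..}"
      then have nu: "1 \<le> \<nu>" by simp
      have "esssup (law \<mu> p0 p1 \<nu>) (nn_cond_exp (law \<mu> p0 p1 \<nu>) (filt \<mu> (law \<mu> p0 p1 \<nu>) (\<nu> - 1))
            (\<lambda>\<omega>. delay (nglr_tau est p0 (m b) b \<omega>) \<nu>)) \<le> of_nat L * (\<integral>\<^sup>+ y. Gf est p0 L b y \<partial>iid_law \<mu> p1)"
        by (rule esssup_bound[OF sets_mu dens0 dens1 est_meas L2 Lm nu])
      also have "\<dots> \<le> of_nat L * ennreal (1 / (1 - q0))" by (intro mult_left_mono intb) simp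
      finally show "esssup (law \<mu> p0 p1 \<nu>) (nn_cond_exp (law \<mu> p0 p1 \<nu>) (filt \<mu> (law \<mu> p0 p1 \<nu>) (\<nu> - 1))
            (\<lambda>\<omega>. delay (nglr_tau est p0 (m b) b \<omega>) \<nu>)) \<le> of_nat L * ennreal (1 / (1 - q0))" .
    qed
    also have "of_nat L * ennreal (1 / (1 - q0)) = ennreal (real L / (1 - q0))"
    proof -
      have "ennreal (real L) * ennreal (1 / (1 - q0)) = ennreal (real L * (1 / (1 - q0)))"
        by (rule ennreal_mult[symmetric]) (use q0lt1 in auto)
      then show ?thesis by (simp add: ennreal_of_nat_eq_real_of_nat)
    qed
    also have "\<dots> \<le> ennreal ((1 + \<epsilon>) * b / I)"
    proof (rule ennreal_leI)
      have y3: "1 \<le> \<epsilon> / 3 * (b / I)" using b2' eps I_pos by (simp add: field_simps)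
      have "real L \<le> (1 + \<epsilon>1) * (b / I) + 1" using Lx1 unfolding x_def by simp
      also have "\<dots> \<le> (1 + \<epsilon>/3) * (b / I) + \<epsilon> / 3 * (b / I)"
        using e1le y3 bpos I_pos by (intro add_mono mult_right_mono) auto
      also have "\<dots> = (1 + 2 * \<epsilon> / 3) * (b / I)" by (simp add: algebra_simps)
      finally have Lb: "real L \<le> (1 + 2 * \<epsilon> / 3) * (b / I)" .
      have q: "1 - q0 = (3 + 2 * \<epsilon>) / (3 * (1 + \<epsilon>))" unfolding q0_def using eps by (simp add: field_simps)
      have "real L / (1 - q0) \<le> (1 + 2 * \<epsilon> / 3) * (b / I) / (1 - q0)"
        using Lb q0lt1 by (intro divide_right_mono) auto
      also have "\<dots> = (1 + \<epsilon>) * b / I"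
      proof -
        have "I \<noteq> 0" "3 + 2 * \<epsilon> \<noteq> 0" "1 + \<epsilon> \<noteq> 0" using eps I_pos by auto
        then show ?thesis unfolding q by (simp add: divide_simps)
      qed
      finally show "real L / (1 - q0) \<le> (1 + \<epsilon>) * b / I" .
    qed
    finally show ?case .
  qed
qed

end
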